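(* Let $H_0,H_1$ be complex Hilbert spaces, $G$ a densely defined closed operator from $H_0$ into $H_1$ and $D$ a densely defined closed operator from $H_1$ into $H_0$ with $-G^*\subset D$. Let $m\in\mathcal L(H_0)$ (not necessarily coercive) and let $a\in\mathcal L(H_1)$ be coercive. Let $T\in\mathcal L(\mathrm{dom}(G))$ be defined by $(Tu,v)_{\mathrm{dom}(G)}=(aGu,Gv)_{H_1}+(mu,v)_{H_0}$ for all $u,v\in\mathrm{dom}(G)$, and assume $\mathrm{ran}(T)$ is closed in $\mathrm{dom}(G)$. Then the Dirichlet-to-Neumann graph $\Lambda$ associated with $-DaG+m$ satisfies \[ \mathrm{dom}(\Lambda^{-1})=\{q_0\in\mathrm{BD}(D):(Dq_0,\pi_{\mathrm{BD}(G)}v)_{\mathrm{BD}(G)}=0\text{ for all }v\in\ker(m^*-\mathring Da^*G)\}. \]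
   Context: $\mathring D=-G^*$, $\mathring G=-D^*$. Domains carry graph inner products, e.g. $(u,v)_{\mathrm{dom}(G)}=(u,v)_{H_0}+(Gu,Gv)_{H_1}$. $\mathrm{BD}(G)$ (resp. $\mathrm{BD}(D)$) is the orthogonal complement of $\mathrm{dom}(\mathring G)$ in $\mathrm{dom}(G)$ (resp. of $\mathrm{dom}(\mathring D)$ in $\mathrm{dom}(D)$) with induced inner products; $\pi_{\mathrm{BD}(G)},\pi_{\mathrm{BD}(D)}$ the orthogonal projections. $D$ maps $\mathrm{BD}(D)$ into $\mathrm{BD}(G)$. Coercive: $\mathrm{Re}(ax,x)\ge\mu\|x\|^2$ for some $\mu>0$. The Dirichlet-to-Neumann graph is $\Lambda=\{(\pi_{\mathrm{BD}(G)}u,\pi_{\mathrm{BD}(D)}aGu): u\in\mathrm{dom}(G),\ aGu\in\mathrm{dom}(D),\ mu-DaGu=0\}$; its inverse graph is $\Lambda^{-1}=\{(q,p):(p,q)\in\Lambda\}$ and $\mathrm{dom}(\Lambda^{-1})$ the set of its first components. $\ker(m^*-\mathring Da^*G)=\{v\in\mathrm{dom}(G):a^*Gv\in\mathrm{dom}(\mathring D),\ m^*v=\mathring Da^*Gv\}$. *)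

theory Defs
  imports "HOL-Analysis.Analysis"
begin

class chilbert = banach +
  fixes scaleC :: "complex \<Rightarrow> 'a \<Rightarrow> 'a"
    and cinner :: "'a \<Rightarrow> 'a \<Rightarrow> complex"
  assumes scaleC_of_real: "scaleC (complex_of_real r) x = scaleR r x"
    and scaleC_add_right: "scaleC c (x + y) = scaleC c x + scaleC c y"
    and scaleC_add_left: "scaleC (c + d) x = scaleC c x + scaleC d x"
    and scaleC_scaleC: "scaleC c (scaleC d x) = scaleC (c * d) x"
    and scaleC_one: "scaleC 1 x = x"
    and cinner_add_left: "cinner (x + y) z = cinner x z + cinner y z"
    and cinner_scaleC_left: "cinner (scaleC c x) y = c * cinner x y"
    and cinner_commute: "cinner y x = cnj (cinner x y)"
    and cinner_self_real: "Im (cinner x x) = 0"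
    and cinner_self_nonneg: "0 \<le> Re (cinner x x)"
    and cinner_self_eq_0: "cinner x x = 0 \<longleftrightarrow> x = 0"
    and norm_eq_sqrt_cinner: "norm x = sqrt (Re (cinner x x))"

definition cbounded_linear :: "('a::chilbert \<Rightarrow> 'b::chilbert) \<Rightarrow> bool" where
  "cbounded_linear f \<longleftrightarrow>
     (\<forall>x y. f (x + y) = f x + f y) \<and> (\<forall>c x. f (scaleC c x) = scaleC c (f x)) \<and>
     (\<exists>K. \<forall>x. norm (f x) \<le> K * norm x)"

definition badj :: "('a::chilbert \<Rightarrow> 'b::chilbert) \<Rightarrow> 'b \<Rightarrow> 'a" where
  "badj f y = (THE z. \<forall>x. cinner (f x) y = cinner x z)"

definition coercive :: "('a::chilbert \<Rightarrow> 'a) \<Rightarrow> bool" where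
  "coercive a \<longleftrightarrow> (\<exists>\<mu>>0. \<forall>x. Re (cinner (a x) x) \<ge> \<mu> * (norm x)\<^sup>2)"

section \<open>Unbounded operators, represented by their graphs\<close>

definition linear_operator :: "('a::chilbert \<times> 'b::chilbert) set \<Rightarrow> bool" where
  "linear_operator A \<longleftrightarrow>
     (0, 0) \<in> A \<and>
     (\<forall>p\<in>A. \<forall>q\<in>A. p + q \<in> A) \<and>
     (\<forall>c. \<forall>(x, y)\<in>A. (scaleC c x, scaleC c y) \<in> A) \<and>
     (\<forall>y. (0, y) \<in> A \<longrightarrow> y = 0)"

definition densely_defined_closed :: "('a::chilbert \<times> 'b::chilbert) set \<Rightarrow> bool" where
  "densely_defined_closed A \<longleftrightarrow>
     linear_operator A \<and> closure (Domain A) = UNIV \<and> closed A"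

definition opap :: "('a \<times> 'b) set \<Rightarrow> 'a \<Rightarrow> 'b" where
  "opap A x = (THE y. (x, y) \<in> A)"

definition adj :: "('a::chilbert \<times> 'b::chilbert) set \<Rightarrow> ('b \<times> 'a) set" where
  "adj A = {(y, z). \<forall>(x, w)\<in>A. cinner w y = cinner x z}"

definition opneg :: "('a \<times> 'b::uminus) set \<Rightarrow> ('a \<times> 'b) set" where
  "opneg A = {(x, - y) | x y. (x, y) \<in> A}"

text \<open>\<open>\<mathring>D = -G\<^sup>*\<close>, \<open>\<mathring>G = -D\<^sup>*\<close>.\<close>
definition ring_op :: "('a::chilbert \<times> 'b::chilbert) set \<Rightarrow> ('b \<times> 'a) set" where
  "ring_op A = opneg (adj A)"

definition gip :: "('a::chilbert \<times> 'b::chilbert) set \<Rightarrow> 'a \<Rightarrow> 'a \<Rightarrow> complex" where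
  "gip A u v = cinner u v + cinner (opap A u) (opap A v)"

definition gnorm :: "('a::chilbert \<times> 'b::chilbert) set \<Rightarrow> 'a \<Rightarrow> real" where
  "gnorm A u = sqrt ((norm u)\<^sup>2 + (norm (opap A u))\<^sup>2)"

text \<open>\<open>BD(A)\<close>: orthogonal complement of \<open>dom(A0)\<close> in \<open>dom(A)\<close> w.r.t. the graph inner
product of \<open>A\<close>, where \<open>A0\<close> is the restricted operator (\<open>\<mathring>G\<close> for \<open>G\<close>, \<open>\<mathring>D\<close> for \<open>D\<close>).\<close>
definition BD :: "('a::chilbert \<times> 'b::chilbert) set \<Rightarrow> ('a \<times> 'b) set \<Rightarrow> 'a set" where
  "BD A A0 = {u \<in> Domain A. \<forall>w\<in>Domain A0. gip A u w = 0}"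

definition piBD :: "('a::chilbert \<times> 'b::chilbert) set \<Rightarrow> ('a \<times> 'b) set \<Rightarrow> 'a \<Rightarrow> 'a" where
  "piBD A A0 u = (THE p. p \<in> BD A A0 \<and> u - p \<in> Domain A0)"

definition DtN ::
  "('a::chilbert \<times> 'b::chilbert) set \<Rightarrow> ('b \<times> 'a) set \<Rightarrow> ('b \<Rightarrow> 'b) \<Rightarrow> ('a \<Rightarrow> 'a)
     \<Rightarrow> ('a \<times> 'b) set" where
  "DtN G D a m =
     {(piBD G (ring_op D) u, piBD D (ring_op G) (a (opap G u))) | u.
        u \<in> Domain G \<and> a (opap G u) \<in> Domain D \<and> m u - opap D (a (opap G u)) = 0}"

definition converse_graph :: "('a \<times> 'b) set \<Rightarrow> ('b \<times> 'a) set" where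
  "converse_graph L = {(q, p). (p, q) \<in> L}"

definition ker_adj ::
  "('a::chilbert \<times> 'b::chilbert) set \<Rightarrow> ('b \<times> 'a) set \<Rightarrow> ('b \<Rightarrow> 'b) \<Rightarrow> ('a \<Rightarrow> 'a) \<Rightarrow> 'a set" where
  "ker_adj G D a m =
     {v \<in> Domain G. badj a (opap G v) \<in> Domain (ring_op G) \<and>
        badj m v = opap (ring_op G) (badj a (opap G v))}"

end

theory Submission
  imports Defs
begin


lemma cinner_zero_left[simp]: "cinner 0 (y::'a::chilbert) = 0"
  using cinner_add_left[of "0::'a" 0 y] by simp

lemma cinner_add_right: "cinner (x::'a::chilbert) (y + z) = cinner x y + cinner x z"
  by (metis cinner_add_left cinner_commute complex_cnj_add)

lemma cinner_scaleC_right: "cinner (x::'a::chilbert) (scaleC c y) = cnj c * cinner x y"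
  by (metis cinner_commute cinner_scaleC_left complex_cnj_mult)

lemma cinner_zero_right[simp]: "cinner (x::'a::chilbert) 0 = 0"
  by (metis cinner_commute cinner_zero_left complex_cnj_zero)

lemma cinner_minus_left: "cinner (- x::'a::chilbert) y = - cinner x y"
  using cinner_add_left[of x "-x" y] by (simp add: add_eq_0_iff2)

lemma cinner_minus_right: "cinner (x::'a::chilbert) (- y) = - cinner x y"
  by (metis cinner_commute cinner_minus_left complex_cnj_minus)

lemma cinner_diff_left: "cinner (x - z::'a::chilbert) y = cinner x y - cinner z y"
  using cinner_add_left[of x "-z" y] by (simp add: cinner_minus_left)

lemma cinner_diff_right: "cinner (x::'a::chilbert) (y - z) = cinner x y - cinner x z"
  using cinner_add_right[of x y "-z"] by (simp add: cinner_minus_right)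

lemma cinner_scaleR_left: "cinner (scaleR r x::'a::chilbert) y = of_real r * cinner x y"
  by (metis cinner_scaleC_left scaleC_of_real)

lemma cinner_scaleR_right: "cinner (x::'a::chilbert) (scaleR r y) = of_real r * cinner x y"
  by (metis cinner_scaleC_right scaleC_of_real complex_cnj_complex_of_real)

lemma cinner_self_norm: "cinner (x::'a::chilbert) x = complex_of_real ((norm x)\<^sup>2)"
  using cinner_self_real[of x] cinner_self_nonneg[of x] norm_eq_sqrt_cinner[of x]
  by (simp add: complex_eq_iff)

lemma scaleC_minus1: "scaleC (-1) (x::'a::chilbert) = - x"
  using scaleC_of_real[of "-1" x] by simp

lemma scaleC_zero_right[simp]: "scaleC c (0::'a::chilbert) = 0"
  using scaleC_add_right[of c "0::'a" 0] by simp

lemma scaleC_zero_left[simp]: "scaleC 0 (x::'a::chilbert) = 0"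
  using scaleC_of_real[of 0 x] by simp

lemma scaleC_minus_right: "scaleC c (- x::'a::chilbert) = - scaleC c x"
  by (metis add.right_inverse add_eq_0_iff scaleC_add_right scaleC_zero_right)

lemma scaleC_diff_right: "scaleC c (x - y::'a::chilbert) = scaleC c x - scaleC c y"
  by (metis diff_conv_add_uminus scaleC_add_right scaleC_minus_right)

lemma cinner_expand:
  "cinner (y - scaleC c t) (y - scaleC c (t::'a::chilbert)) =
     cinner y y - cnj c * cinner y t - c * cinner t y + c * cnj c * cinner t t"
  by (simp add: cinner_diff_left cinner_diff_right cinner_scaleC_left cinner_scaleC_right algebra_simps)

lemma cinner_eq0_iff: "cinner x x = 0 \<longleftrightarrow> (x::'a::chilbert) = 0"
  by (rule cinner_self_eq_0)

lemma cauchy_schwarz: "norm (cinner x y) \<le> norm x * norm (y::'a::chilbert)"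
proof (cases "y = 0")
  case True thus ?thesis by simp
next
  case False
  define A where "A = cinner x y"
  define N where "N = (norm y)\<^sup>2"
  have N: "N > 0" using False by (simp add: N_def)
  define t where "t = A / of_real N"
  have cyy: "cinner y y = of_real N" by (simp add: N_def cinner_self_norm)
  have cyx: "cinner y x = cnj A" by (simp add: A_def cinner_commute[of y x])
  have "0 \<le> Re (cinner (x - scaleC t y) (x - scaleC t y))" by (rule cinner_self_nonneg)
  also have "cinner (x - scaleC t y) (x - scaleC t y) = of_real ((norm x)\<^sup>2) - A * cnj A / of_real N"
    unfolding cinner_expand cyy cyx A_def[symmetric] t_def using N
    by (simp add: cinner_self_norm field_simps)
  finally have "Re (A * cnj A) / N \<le> (norm x)\<^sup>2" using N by simp
  hence "(norm A)\<^sup>2 \<le> (norm x)\<^sup>2 * N" using N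
    by (simp add: complex_mult_cnj cmod_def field_simps power2_eq_square)
  hence "(norm A)\<^sup>2 \<le> (norm x * norm y)\<^sup>2" by (simp add: N_def power_mult_distrib)
  thus ?thesis unfolding A_def by (simp add: power2_le_iff_abs_le)
qed

lemma bb_cinner: "bounded_bilinear (cinner :: 'a::chilbert \<Rightarrow> 'a \<Rightarrow> complex)"
proof
  fix a a' b b' :: 'a and r :: real
  show "cinner (a + a') b = cinner a b + cinner a' b" by (rule cinner_add_left)
  show "cinner a (b + b') = cinner a b + cinner a b'" by (rule cinner_add_right)
  show "cinner (r *\<^sub>R a) b = r *\<^sub>R cinner a b" by (simp add: cinner_scaleR_left scaleR_conv_of_real)
  show "cinner a (r *\<^sub>R b) = r *\<^sub>R cinner a b" by (simp add: cinner_scaleR_right scaleR_conv_of_real)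
  show "\<exists>K. \<forall>a b. norm (cinner a b) \<le> norm a * norm (b::'a) * K"
    by (rule exI[of _ 1]) (simp add: cauchy_schwarz)
qed

lemma cbl_bounded_linear: "cbounded_linear f \<Longrightarrow> bounded_linear f"
  unfolding cbounded_linear_def
proof (elim conjE exE)
  fix K assume h: "\<forall>x y. f (x + y) = f x + f y" "\<forall>c x. f (scaleC c x) = scaleC c (f x)"
    "\<forall>x. norm (f x) \<le> K * norm x"
  show "bounded_linear f"
    by (rule bounded_linear_intro[where K = K]) (use h in \<open>auto simp: mult.commute simp flip: scaleC_of_real\<close>)
qed



lemma norm_sq_cinner: "(norm (v::'a::chilbert))\<^sup>2 = Re (cinner v v)"
  by (simp add: cinner_self_norm)

lemma parallelogram:
  "(norm (a + b::'a::chilbert))\<^sup>2 + (norm (a - b))\<^sup>2 = 2 * (norm a)\<^sup>2 + 2 * (norm b)\<^sup>2"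
  unfolding norm_sq_cinner
  by (simp add: cinner_add_left cinner_add_right cinner_diff_left cinner_diff_right)

lemma proj_exists:
  fixes S :: "'a::chilbert set" and x :: 'a
  assumes cl: "closed S" and z: "0 \<in> S" and add: "\<forall>u\<in>S. \<forall>v\<in>S. u + v \<in> S"
    and sc: "\<forall>c. \<forall>u\<in>S. scaleC c u \<in> S"
  shows "\<exists>p\<in>S. \<forall>t\<in>S. cinner (x - p) t = 0"
proof -
  define d where "d = infdist x S"
  have d0: "0 \<le> d" by (simp add: d_def infdist_nonneg)
  define e :: "nat \<Rightarrow> real" where "e n = 1 / (real n + 1)" for n
  have epos: "0 < e n" for n by (simp add: e_def)
  have ele1: "e n \<le> 1" for n by (simp add: e_def)
  have "\<exists>s\<in>S. dist x s < d + e n" for n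
  proof -
    have "S \<noteq> {}" using z by auto
    moreover have "bdd_below ((dist x) ` S)" by (rule bdd_belowI[of _ 0]) auto
    moreover have "infdist x S < d + e n" using epos[of n] by (simp add: d_def)
    ultimately show ?thesis by (simp add: infdist_notempty cINF_less_iff)
  qed
  then obtain s where s: "\<And>n. s n \<in> S" "\<And>n. dist x (s n) < d + e n" by metis
  have dle: "d \<le> dist x t" if "t \<in> S" for t using that by (simp add: d_def infdist_le)
  have sq: "(dist x (s n))\<^sup>2 \<le> d\<^sup>2 + e n * (2 * d + 1)" for n
  proof -
    have "(dist x (s n))\<^sup>2 \<le> (d + e n)\<^sup>2"
      using s(2)[of n] zero_le_dist[of x "s n"] by (simp add: power_mono)
    also have "\<dots> = d\<^sup>2 + e n * (2 * d + e n)" by (simp add: power2_eq_square algebra_simps)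
    also have "\<dots> \<le> d\<^sup>2 + e n * (2 * d + 1)" using epos[of n] ele1[of n] by (simp add: mult_left_mono)
    finally show ?thesis .
  qed
  have diff: "(dist (s n) (s m))\<^sup>2 \<le> 2 * (2 * d + 1) * (e n + e m)" for n m
  proof -
    define mid where "mid = scaleR (1/2) (s n + s m)"
    have "mid \<in> S" unfolding mid_def using add s(1) sc by (metis scaleC_of_real)
    hence "d \<le> dist x mid" by (rule dle)
    hence dm: "d\<^sup>2 \<le> (norm (x - mid))\<^sup>2" using d0 by (simp add: dist_norm power_mono)
    have e1: "(x - s n) + (x - s m) = scaleR 2 (x - mid)" by (simp add: mid_def algebra_simps scaleR_2)
    have "(norm ((x - s n) + (x - s m)))\<^sup>2 = 4 * (norm (x - mid))\<^sup>2"
      unfolding e1 by (simp add: power2_eq_square)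
    moreover have "(x - s n) - (x - s m) = s m - s n" by simp
    ultimately have "4 * (norm (x - mid))\<^sup>2 + (norm (s m - s n))\<^sup>2 =
        2 * (norm (x - s n))\<^sup>2 + 2 * (norm (x - s m))\<^sup>2"
      using parallelogram[of "x - s n" "x - s m"] by simp
    moreover have "(norm (x - s n))\<^sup>2 \<le> d\<^sup>2 + e n * (2 * d + 1)" using sq[of n] by (simp add: dist_norm)
    moreover have "(norm (x - s m))\<^sup>2 \<le> d\<^sup>2 + e m * (2 * d + 1)" using sq[of m] by (simp add: dist_norm)
    ultimately have "(norm (s m - s n))\<^sup>2 \<le> 2 * (2 * d + 1) * (e n + e m)" using dm
      by (simp add: algebra_simps)
    thus ?thesis by (simp add: dist_norm norm_minus_commute)
  qed
  have "Cauchy s"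
  proof (rule metric_CauchyI)
    fix \<epsilon> :: real assume ep: "0 < \<epsilon>"
    define K where "K = 4 * (2 * d + 1)"
    have K: "0 < K" using d0 by (simp add: K_def)
    obtain M :: nat where M: "1 / (real M + 1) < \<epsilon>\<^sup>2 / K"
      using reals_Archimedean[of "\<epsilon>\<^sup>2 / K"] ep K
      by (metis divide_pos_pos inverse_eq_divide of_nat_Suc add.commute zero_less_power)
    show "\<exists>M. \<forall>m\<ge>M. \<forall>n\<ge>M. dist (s m) (s n) < \<epsilon>"
    proof (intro exI allI impI)
      fix m n assume mn: "M \<le> m" "M \<le> n"
      have em: "e m \<le> e M" "e n \<le> e M" using mn by (auto simp: e_def frac_le)
      have "(dist (s m) (s n))\<^sup>2 \<le> 2 * (2 * d + 1) * (e m + e n)" by (rule diff)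
      also have "\<dots> \<le> K * e M"
      proof -
        have "e m + e n \<le> 2 * e M" using em by simp
        hence "2 * (2 * d + 1) * (e m + e n) \<le> 2 * (2 * d + 1) * (2 * e M)"
          using d0 by (intro mult_left_mono) auto
        thus ?thesis by (simp add: K_def algebra_simps)
      qed
      also have "\<dots> < \<epsilon>\<^sup>2" using M K by (simp add: e_def field_simps)
      finally show "dist (s m) (s n) < \<epsilon>" using ep by (simp add: power_less_imp_less_base)
    qed
  qed
  then obtain p where p: "s \<longlonglongrightarrow> p" using Cauchy_convergent convergent_def by blast
  have pS: "p \<in> S" using closed_sequentially[OF cl] s(1) p by blast
  have "e \<longlonglongrightarrow> 0" unfolding e_def
    using LIMSEQ_inverse_real_of_nat by (simp add: inverse_eq_divide add.commute)
  hence "(\<lambda>n. d + e n) \<longlonglongrightarrow> d + 0" by (intro tendsto_intros)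
  moreover have "(\<lambda>n. dist x (s n)) \<longlonglongrightarrow> dist x p" using p by (intro tendsto_intros)
  ultimately have "dist x p \<le> d" using s(2) by (intro LIMSEQ_le[of "\<lambda>n. dist x (s n)" _ "\<lambda>n. d + e n"]) (auto intro: less_imp_le)
  hence minp: "norm (x - p) \<le> norm (x - t)" if "t \<in> S" for t using dle[OF that] by (simp add: dist_norm)
  show ?thesis
  proof (intro bexI[OF _ pS] ballI)
    fix t assume tS: "t \<in> S"
    define y where "y = x - p"
    define A where "A = cinner y t"
    show "cinner (x - p) t = 0"
    proof (rule ccontr)
      assume "cinner (x - p) t \<noteq> 0"
      hence A0: "A \<noteq> 0" by (simp add: A_def y_def)
      define M where "M = Re (A * cnj A)"
      have M: "0 < M" using A0 by (simp add: M_def complex_mult_cnj complex_eq_iff sum_power2_gt_zero_iff)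
      have AA: "A * cnj A = of_real M" by (simp add: M_def complex_mult_cnj)
      define N where "N = (norm t)\<^sup>2"
      have N0: "0 \<le> N" by (simp add: N_def)
      define r where "r = 1 / (N + 1)"
      have r: "0 < r" "r * N < 1" using N0 by (auto simp: r_def field_simps)
      define c where "c = of_real r * A"
      have "p + scaleC c t \<in> S" using add sc pS tS by blast
      hence "norm y \<le> norm (y - scaleC c t)" using minp[of "p + scaleC c t"] by (simp add: y_def algebra_simps)
      hence "(norm y)\<^sup>2 \<le> (norm (y - scaleC c t))\<^sup>2" by (simp add: power_mono)
      also have "(norm (y - scaleC c t))\<^sup>2 = (norm y)\<^sup>2 - 2 * r * M + r * r * M * N"
      proof -
        have "cinner (y - scaleC c t) (y - scaleC c t) =
          cinner y y - of_real r * (A * cnj A) - of_real r * (A * cnj A) + of_real r * of_real r * (A * cnj A) * cinner t t"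
          unfolding cinner_expand c_def using cinner_commute[of t y]
          by (simp add: A_def algebra_simps)
        thus ?thesis unfolding norm_sq_cinner AA by (simp add: N_def cinner_self_norm)
      qed
      finally have "2 * r * M \<le> r * r * M * N" by simp
      hence "r * M * 2 \<le> r * M * (r * N)" by (simp add: algebra_simps)
      hence "2 \<le> r * N" using r M by simp
      thus False using r by simp
    qed
  qed
qed



instantiation prod :: (chilbert, chilbert) chilbert
begin
definition scaleC_prod :: "complex \<Rightarrow> 'a \<times> 'b \<Rightarrow> 'a \<times> 'b" where
  "scaleC_prod c p = (scaleC c (fst p), scaleC c (snd p))"
definition cinner_prod :: "'a \<times> 'b \<Rightarrow> 'a \<times> 'b \<Rightarrow> complex" where
  "cinner_prod p q = cinner (fst p) (fst q) + cinner (snd p) (snd q)"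
instance
proof
  fix r :: real and x y :: "'a \<times> 'b" and c d :: complex
  show "scaleC (complex_of_real r) x = r *\<^sub>R x" by (simp add: scaleC_prod_def scaleC_of_real prod_eq_iff)
  show "scaleC c (x + y) = scaleC c x + scaleC c y" by (simp add: scaleC_prod_def scaleC_add_right)
  show "scaleC (c + d) x = scaleC c x + scaleC d x" by (simp add: scaleC_prod_def scaleC_add_left)
  show "scaleC c (scaleC d x) = scaleC (c * d) x" by (simp add: scaleC_prod_def scaleC_scaleC)
  show "scaleC 1 x = x" by (simp add: scaleC_prod_def scaleC_one)
next
  fix x y z :: "'a \<times> 'b" and c :: complex
  show "cinner (x + y) z = cinner x z + cinner y z" by (simp add: cinner_prod_def cinner_add_left)
  show "cinner (scaleC c x) y = c * cinner x y"
    by (simp add: cinner_prod_def scaleC_prod_def cinner_scaleC_left algebra_simps)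
  show "cinner y x = cnj (cinner x y)" by (simp add: cinner_prod_def cinner_commute[of "fst y"] cinner_commute[of "snd y"])
  show "Im (cinner x x) = 0" by (simp add: cinner_prod_def cinner_self_real)
  show "0 \<le> Re (cinner x x)" by (simp add: cinner_prod_def cinner_self_nonneg)
  show "(cinner x x = 0) = (x = 0)"
  proof -
    have "cinner x x = of_real ((norm (fst x))\<^sup>2 + (norm (snd x))\<^sup>2)"
      by (simp add: cinner_prod_def cinner_self_norm)
    moreover have "(of_real ((norm (fst x))\<^sup>2 + (norm (snd x))\<^sup>2) = (0::complex)) \<longleftrightarrow>
        (norm (fst x))\<^sup>2 + (norm (snd x))\<^sup>2 = 0" by (simp only: of_real_eq_0_iff)
    ultimately show ?thesis by (simp only: prod_eq_iff add_nonneg_eq_0_iff zero_le_power2) simp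
  qed
  show "norm x = sqrt (Re (cinner x x))"
    by (cases x) (simp add: norm_Pair cinner_prod_def norm_sq_cinner)
qed
end

lemma scaleC_Pair[simp]: "scaleC c (a, b) = (scaleC c a, scaleC c b)"
  by (simp add: scaleC_prod_def)
lemma cinner_Pair[simp]: "cinner (a, b) (c, d) = cinner a c + cinner b d"
  by (simp add: cinner_prod_def)

lemma cont_cinner_left: "continuous_on UNIV (\<lambda>x. cinner (x::'a::chilbert) y)"
  by (intro bounded_bilinear.continuous_on[OF bb_cinner] continuous_intros)

lemma cont_cinner_right: "continuous_on UNIV (\<lambda>y. cinner (x::'a::chilbert) y)"
  by (intro bounded_bilinear.continuous_on[OF bb_cinner] continuous_intros)

lemma badj_exists:
  fixes f :: "'a::chilbert \<Rightarrow> 'b::chilbert"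
  assumes f: "cbounded_linear f"
  shows "\<exists>z. \<forall>x. cinner (f x) y = cinner x z"
proof -
  have fadd: "f (u + v) = f u + f v" and fsc: "f (scaleC c u) = scaleC c (f u)" for u v c
    using f unfolding cbounded_linear_def by auto
  have fz: "f 0 = 0" using fadd[of 0 0] by simp
  define K where "K = {x. cinner (f x) y = 0}"
  have "continuous_on UNIV (\<lambda>x. cinner (f x) y)"
    using bounded_linear.continuous_on[OF cbl_bounded_linear[OF f], of UNIV id]
    by (intro bounded_bilinear.continuous_on[OF bb_cinner] continuous_intros) (auto simp: id_def)
  hence clK: "closed K" unfolding K_def by (intro closed_Collect_eq) (auto intro: continuous_intros)
  show ?thesis
  proof (cases "\<forall>x. x \<in> K")
    case True thus ?thesis by (intro exI[of _ 0]) (simp add: K_def)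
  next
    case False
    then obtain x0 where x0: "x0 \<notin> K" by blast
    have "\<exists>p\<in>K. \<forall>t\<in>K. cinner (x0 - p) t = 0"
      by (rule proj_exists[OF clK]) (auto simp: K_def fadd fsc fz cinner_add_left cinner_scaleC_left)
    then obtain p where pK: "p \<in> K" and orth: "\<forall>t\<in>K. cinner (x0 - p) t = 0" by blast
    define w where "w = x0 - p"
    define phi where "phi x = cinner (f x) y" for x
    have phiw: "phi w = phi x0" using pK fadd[of "x0 - p" p]
      by (simp add: phi_def w_def K_def cinner_add_left)
    have phiw0: "phi w \<noteq> 0" using x0 phiw by (simp add: K_def phi_def)
    have w0: "w \<noteq> 0" using phiw0 fz by (auto simp: phi_def)
    have cww: "cinner w w \<noteq> 0" using w0 by (simp add: cinner_self_eq_0)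
    define z where "z = scaleC (cnj (phi w / cinner w w)) w"
    show ?thesis
    proof (intro exI allI)
      fix x
      define k where "k = x - scaleC (phi x / phi w) w"
      have "f k = f x - scaleC (phi x / phi w) (f w)"
        using fadd[of k "scaleC (phi x / phi w) w"] fsc by (simp add: k_def)
      hence "phi k = phi x - (phi x / phi w) * phi w"
        by (simp add: phi_def cinner_diff_left cinner_scaleC_left)
      hence "k \<in> K" using phiw0 by (simp add: K_def phi_def)
      hence "cinner w k = 0" using orth by (simp add: w_def)
      hence "cinner k w = 0" by (metis cinner_commute complex_cnj_zero)
      hence "cinner x w = (phi x / phi w) * cinner w w"
        by (simp add: k_def cinner_diff_left cinner_scaleC_left)
      hence "phi x = phi w * cinner x w / cinner w w" using phiw0 cww by (simp add: field_simps)
      thus "cinner (f x) y = cinner x z"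
        by (simp add: z_def cinner_scaleC_right phi_def field_simps)
    qed
  qed
qed

lemma badj_prop:
  fixes f :: "'a::chilbert \<Rightarrow> 'b::chilbert"
  assumes f: "cbounded_linear f"
  shows "cinner (f x) y = cinner x (badj f y)"
proof -
  have ex1: "\<exists>!z. \<forall>x. cinner (f x) y = cinner x z"
  proof (rule ex_ex1I)
    show "\<exists>z. \<forall>x. cinner (f x) y = cinner x z" by (rule badj_exists[OF f])
  next
    fix z z' assume "\<forall>x. cinner (f x) y = cinner x z" "\<forall>x. cinner (f x) y = cinner x z'"
    hence "cinner (z - z') (z - z') = 0" by (simp add: cinner_diff_right)
    thus "z = z'" by (simp add: cinner_self_eq_0)
  qed
  show ?thesis unfolding badj_def using theI'[OF ex1] by blast
qed



definition csub :: "'a::chilbert set \<Rightarrow> bool" where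
  "csub S \<longleftrightarrow> 0 \<in> S \<and> (\<forall>u\<in>S. \<forall>v\<in>S. u + v \<in> S) \<and> (\<forall>c. \<forall>u\<in>S. scaleC c u \<in> S)"

lemma csub_diff: "csub S \<Longrightarrow> u \<in> S \<Longrightarrow> v \<in> S \<Longrightarrow> u - v \<in> S"
  unfolding csub_def by (metis diff_conv_add_uminus scaleC_minus1)

lemma lin_csub: "linear_operator A \<Longrightarrow> csub A"
  unfolding linear_operator_def csub_def
proof (elim conjE, intro conjI)
  assume h: "\<forall>c. \<forall>(x, y)\<in>A. (scaleC c x, scaleC c y) \<in> A"
  show "\<forall>c. \<forall>u\<in>A. scaleC c u \<in> A"
  proof (intro allI ballI)
    fix c u assume "u \<in> A" thus "scaleC c u \<in> A" using h by (cases u) auto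
  qed
qed (auto simp: zero_prod_def)

lemma lin_unique:
  assumes "linear_operator A" "(x, y) \<in> A" "(x, y') \<in> A" shows "y = y'"
proof -
  have "(x, y) - (x, y') \<in> A" by (rule csub_diff[OF lin_csub[OF assms(1)] assms(2,3)])
  hence "(0, y - y') \<in> A" by simp
  moreover have "\<forall>y. (0, y) \<in> A \<longrightarrow> y = 0" using assms(1) unfolding linear_operator_def by blast
  ultimately have "y - y' = 0" by blast
  thus ?thesis by simp
qed

lemma opap_eq: assumes "A0 \<subseteq> A" "linear_operator A" "(x, y) \<in> A0" shows "opap A0 x = y"
  unfolding opap_def
proof (rule the_equality)
  show "(x, y) \<in> A0" by fact
  fix y' assume "(x, y') \<in> A0"
  thus "y' = y" using lin_unique[OF assms(2)] assms(1,3) by blast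
qed

lemma opap_in: assumes "A0 \<subseteq> A" "linear_operator A" "x \<in> Domain A0" shows "(x, opap A0 x) \<in> A0"
proof -
  obtain y where y: "(x, y) \<in> A0" using assms(3) by blast
  thus ?thesis using opap_eq[OF assms(1,2) y] by simp
qed

lemma opap_eq1: "linear_operator A \<Longrightarrow> (x, y) \<in> A \<Longrightarrow> opap A x = y"
  by (rule opap_eq) auto

lemma opap_in1: "linear_operator A \<Longrightarrow> x \<in> Domain A \<Longrightarrow> (x, opap A x) \<in> A"
  by (rule opap_in) auto

lemma dom_add:
  assumes A: "linear_operator A" and x: "x \<in> Domain A" and y: "y \<in> Domain A"
  shows "x + y \<in> Domain A" "opap A (x + y) = opap A x + opap A y"
proof -
  have "(x, opap A x) + (y, opap A y) \<in> A"
    using A opap_in1[OF A x] opap_in1[OF A y] unfolding linear_operator_def by blast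
  hence h: "(x + y, opap A x + opap A y) \<in> A" by simp
  thus "x + y \<in> Domain A" by blast
  show "opap A (x + y) = opap A x + opap A y" using opap_eq1[OF A h] .
qed

lemma dom_diff:
  assumes A: "linear_operator A" and x: "x \<in> Domain A" and y: "y \<in> Domain A"
  shows "x - y \<in> Domain A" "opap A (x - y) = opap A x - opap A y"
proof -
  have "(x, opap A x) - (y, opap A y) \<in> A"
    using csub_diff[OF lin_csub[OF A] opap_in1[OF A x] opap_in1[OF A y]] .
  hence h: "(x - y, opap A x - opap A y) \<in> A" by simp
  thus "x - y \<in> Domain A" by blast
  show "opap A (x - y) = opap A x - opap A y" using opap_eq1[OF A h] .
qed

lemma dom_scale:
  assumes A: "linear_operator A" and x: "x \<in> Domain A"
  shows "scaleC c x \<in> Domain A" "opap A (scaleC c x) = scaleC c (opap A x)"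
proof -
  have h: "(scaleC c x, scaleC c (opap A x)) \<in> A"
    using A opap_in1[OF A x] unfolding linear_operator_def by blast
  thus "scaleC c x \<in> Domain A" by blast
  show "opap A (scaleC c x) = scaleC c (opap A x)" using opap_eq1[OF A h] .
qed

lemma dom_zero: "linear_operator A \<Longrightarrow> 0 \<in> Domain A \<and> opap A 0 = 0"
  using opap_eq1[of A 0 0] unfolding linear_operator_def by auto

lemma adj_iff: "(y, z) \<in> adj A \<longleftrightarrow> (\<forall>x w. (x, w) \<in> A \<longrightarrow> cinner w y = cinner x z)"
  unfolding adj_def by blast

lemma opneg_iff: "(x, y) \<in> opneg A \<longleftrightarrow> (x, - y) \<in> (A::('a \<times> 'b::ab_group_add) set)"
proof
  assume "(x, y) \<in> opneg A" thus "(x, - y) \<in> A" unfolding opneg_def by auto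
next
  assume "(x, - y) \<in> A" thus "(x, y) \<in> opneg A" unfolding opneg_def
    by (intro CollectI exI[of _ x] exI[of _ "- y"]) simp
qed

lemma csub_adj: "csub (adj A)"
  unfolding csub_def
proof (intro conjI ballI allI)
  show "0 \<in> adj A" by (simp add: zero_prod_def adj_iff)
next
  fix u v assume "u \<in> adj A" "v \<in> adj A"
  thus "u + v \<in> adj A"
    by (cases u, cases v) (simp add: adj_iff cinner_add_right)
next
  fix c u assume "u \<in> adj A"
  thus "scaleC c u \<in> adj A"
    by (cases u) (simp add: adj_iff cinner_scaleC_right)
qed

lemma closed_adj: "closed (adj (A::('a::chilbert \<times> 'b::chilbert) set))"
proof -
  have "adj A = (\<Inter>q\<in>A. {p. cinner (snd q) (fst p) = cinner (fst q) (snd p)})"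
    unfolding adj_def by fastforce
  moreover have "closed {p::'b \<times> 'a. cinner (snd q) (fst p) = cinner (fst q) (snd p)}" for q :: "'a \<times> 'b"
    by (intro closed_Collect_eq continuous_on_compose2[OF cont_cinner_right[of "snd q"]]
        continuous_on_compose2[OF cont_cinner_right[of "fst q"]] continuous_intros) auto
  ultimately show ?thesis by auto
qed

lemma csub_opneg: assumes "csub A" shows "csub (opneg A)"
  unfolding csub_def
proof (intro conjI ballI allI)
  show "0 \<in> opneg A" using assms by (simp add: csub_def zero_prod_def opneg_iff)
next
  fix u v assume "u \<in> opneg A" "v \<in> opneg A"
  moreover obtain a b c d where "u = (a, b)" "v = (c, d)" by (cases u, cases v)
  ultimately have "(a, - b) \<in> A" "(c, - d) \<in> A" by (simp_all add: opneg_iff)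
  hence "(a, - b) + (c, - d) \<in> A" using assms unfolding csub_def by blast
  thus "u + v \<in> opneg A" using \<open>u = (a, b)\<close> \<open>v = (c, d)\<close> by (simp add: opneg_iff)
next
  fix c u assume "u \<in> opneg A"
  moreover obtain a b where "u = (a, b)" by (cases u)
  ultimately have "(a, - b) \<in> A" by (simp add: opneg_iff)
  hence "scaleC c (a, - b) \<in> A" using assms unfolding csub_def by blast
  thus "scaleC c u \<in> opneg A" using \<open>u = (a, b)\<close> by (simp add: opneg_iff scaleC_minus_right)
qed

lemma closed_opneg: "closed A \<Longrightarrow> closed (opneg (A::('a::chilbert \<times> 'b::chilbert) set))"
proof -
  assume "closed A"
  moreover have "opneg A = (\<lambda>p. (fst p, - snd p)) -` A"
    by (auto simp: opneg_iff)
  moreover have "continuous (at x) (\<lambda>p::'a \<times> 'b. (fst p, - snd p))" for x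
    by (intro continuous_intros)
  ultimately show ?thesis using continuous_closed_vimage by metis
qed

lemma adjadj:
  fixes G :: "('a::chilbert \<times> 'b::chilbert) set"
  assumes G: "linear_operator G" "closed G"
  shows "adj (adj G) \<subseteq> G"
proof
  fix q assume q: "q \<in> adj (adj G)"
  obtain x y where xy: "q = (x, y)" by (cases q)
  obtain p where pG: "p \<in> G" and orth: "\<forall>t\<in>G. cinner ((x, y) - p) t = 0"
    using proj_exists[OF G(2), of "(x, y)"] lin_csub[OF G(1)] unfolding csub_def by blast
  obtain g h where gh: "p = (g, h)" by (cases p)
  define e where "e = x - g"
  define f where "f = y - h"
  have "(f, - e) \<in> adj G" unfolding adj_iff
  proof (intro allI impI)
    fix x' w assume "(x', w) \<in> G"
    hence s0: "cinner e x' + cinner f w = 0" using orth by (auto simp: gh e_def f_def)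
    have c1: "cinner x' e = cnj (cinner e x')" by (rule cinner_commute)
    have c2: "cinner w f = cnj (cinner f w)" by (rule cinner_commute)
    have "cinner x' e + cinner w f = cnj (cinner e x' + cinner f w)" unfolding c1 c2 by simp
    hence "cinner x' e + cinner w f = 0" using s0 by simp
    hence "cinner w f = - cinner x' e" by (simp only: add_eq_0_iff)
    thus "cinner w f = cinner x' (- e)" by (simp only: cinner_minus_right)
  qed
  have qq: "\<forall>a b. (a, b) \<in> adj G \<longrightarrow> cinner b x = cinner a y"
    using q unfolding xy adj_iff by blast
  have h1: "cinner (- e) x = cinner f y" using qq \<open>(f, - e) \<in> adj G\<close> by blast
  have "\<forall>x' w. (x', w) \<in> G \<longrightarrow> cinner w f = cinner x' (- e)"
    using \<open>(f, - e) \<in> adj G\<close> unfolding adj_iff by blast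
  hence "cinner h f = cinner g (- e)" using pG gh by blast
  moreover have "cinner (- e) g = cnj (cinner g (- e))" "cinner f h = cnj (cinner h f)" by (rule cinner_commute)+
  ultimately have h2: "cinner (- e) g = cinner f h" by simp
  have xe: "x = g + e" "y = h + f" by (simp_all add: e_def f_def)
  have "cinner (- e) e = cinner f f"
    using h1 h2 unfolding xe cinner_add_right by simp
  hence "cinner e e + cinner f f = 0" by (simp add: cinner_minus_left) (metis add.right_inverse)
  hence "of_real ((norm e)\<^sup>2 + (norm f)\<^sup>2) = (0::complex)" by (simp add: cinner_self_norm)
  hence "(norm e)\<^sup>2 + (norm f)\<^sup>2 = 0" by (simp only: of_real_eq_0_iff)
  hence "e = 0" "f = 0" by (simp_all add: add_nonneg_eq_0_iff)
  thus "q \<in> G" using pG by (simp add: xy gh e_def f_def)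
qed

lemma gip_pair: "gip A u w = cinner (u, opap A u) (w, opap A w)"
  by (simp add: gip_def)

lemma gip_commute: "gip A u w = cnj (gip A w u)"
  by (simp add: gip_def cinner_commute[of u] cinner_commute[of "opap A u"])

lemma gip_self0: assumes "gip A u u = 0" shows "u = 0"
proof -
  have "cinner (u, opap A u) (u, opap A u) = 0" using assms by (simp only: gip_pair)
  hence "(u, opap A u) = 0" by (simp only: cinner_self_eq_0)
  thus ?thesis by (simp add: zero_prod_def)
qed

lemma gip_diff_left:
  "linear_operator A \<Longrightarrow> x \<in> Domain A \<Longrightarrow> y \<in> Domain A \<Longrightarrow> gip A (x - y) w = gip A x w - gip A y w"
  unfolding gip_def using dom_diff(2)[of A x y] by (simp only: cinner_diff_left) simp

lemma gip_diff_right: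
  "linear_operator A \<Longrightarrow> x \<in> Domain A \<Longrightarrow> y \<in> Domain A \<Longrightarrow> gip A w (x - y) = gip A w x - gip A w y"
  unfolding gip_def using dom_diff(2)[of A x y] by (simp only: cinner_diff_right) simp

lemma piBD_props:
  assumes A: "linear_operator A" and A0: "A0 \<subseteq> A" "closed A0" "csub A0" and u: "u \<in> Domain A"
  shows "piBD A A0 u \<in> BD A A0 \<and> u - piBD A A0 u \<in> Domain A0"
proof -
  have ex: "\<exists>p. p \<in> BD A A0 \<and> u - p \<in> Domain A0"
  proof -
    obtain q where qA0: "q \<in> A0" and orth: "\<forall>t\<in>A0. cinner ((u, opap A u) - q) t = 0"
      using proj_exists[OF A0(2), of "(u, opap A u)"] A0(3) unfolding csub_def by blast
    obtain w w' where ww: "q = (w, w')" by (cases q)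
    have wA: "(w, w') \<in> A" using A0(1) qA0 ww by auto
    hence w'eq: "w' = opap A w" using opap_eq1[OF A] by simp
    have wD: "w \<in> Domain A" using wA by blast
    define p where "p = u - w"
    have pD: "p \<in> Domain A" using dom_diff[OF A u wD] by (simp add: p_def)
    have "p \<in> BD A A0" unfolding BD_def
    proof (intro CollectI conjI ballI pD)
      fix t1 assume "t1 \<in> Domain A0"
      then obtain t2 where t: "(t1, t2) \<in> A0" by blast
      hence "t2 = opap A t1" using A0(1) opap_eq1[OF A] by auto
      hence "cinner ((u, opap A u) - q) (t1, opap A t1) = 0" using orth t by auto
      thus "gip A p t1 = 0" by (simp add: gip_def ww w'eq p_def dom_diff[OF A u wD])
    qed
    moreover have "u - p \<in> Domain A0" using qA0 ww by (auto simp: p_def)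
    ultimately show ?thesis by blast
  qed
  have uniq: "p = p'" if p: "p \<in> BD A A0" "u - p \<in> Domain A0" and p': "p' \<in> BD A A0" "u - p' \<in> Domain A0" for p p'
  proof -
    have "(u - p') - (u - p) \<in> Domain A0"
    proof -
      obtain a b where "(u - p', a) \<in> A0" using p'(2) by blast
      moreover obtain c d where "(u - p, d) \<in> A0" using p(2) by blast
      ultimately have "(u - p', a) - (u - p, d) \<in> A0" by (rule csub_diff[OF A0(3)])
      thus ?thesis by force
    qed
    hence dd: "p - p' \<in> Domain A0" by simp
    have pD: "p \<in> Domain A" "p' \<in> Domain A" using p p' by (auto simp: BD_def)
    have "gip A p (p - p') = 0" "gip A p' (p - p') = 0" using p(1) p'(1) dd by (auto simp: BD_def)
    hence "gip A (p - p') (p - p') = 0" using gip_diff_left[OF A pD] by simp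
    thus ?thesis using gip_self0 by force
  qed
  show ?thesis unfolding piBD_def
    by (rule theI'[of "\<lambda>p. p \<in> BD A A0 \<and> u - p \<in> Domain A0"]) (use ex uniq in blast)
qed


lemma piBD_unique:
  assumes A: "linear_operator A" and A0: "A0 \<subseteq> A" "closed A0" "csub A0" and u: "u \<in> Domain A"
    and p: "p \<in> BD A A0" "u - p \<in> Domain A0"
  shows "piBD A A0 u = p"
proof -
  have pp: "piBD A A0 u \<in> BD A A0" "u - piBD A A0 u \<in> Domain A0" using piBD_props[OF A A0 u] by auto
  define p' where "p' = piBD A A0 u"
  have p': "p' \<in> BD A A0" "u - p' \<in> Domain A0" using pp by (auto simp: p'_def)
  have "(u - p') - (u - p) \<in> Domain A0"
  proof -
    obtain a where "(u - p', a) \<in> A0" using p'(2) by blast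
    moreover obtain d where "(u - p, d) \<in> A0" using p(2) by blast
    ultimately have "(u - p', a) - (u - p, d) \<in> A0" by (rule csub_diff[OF A0(3)])
    thus ?thesis by force
  qed
  hence dd: "p - p' \<in> Domain A0" by simp
  have pD: "p \<in> Domain A" "p' \<in> Domain A" using p p' by (auto simp: BD_def)
  have "gip A p (p - p') = 0" "gip A p' (p - p') = 0" using p(1) p'(1) dd by (auto simp: BD_def)
  hence "gip A (p - p') (p - p') = 0" using gip_diff_left[OF A pD] by simp
  hence "p - p' = 0" by (rule gip_self0)
  thus ?thesis by (simp add: p'_def)
qed



lemma adjI: "(\<And>x w. (x, w) \<in> A \<Longrightarrow> cinner w y = cinner x z) \<Longrightarrow> (y, z) \<in> adj A"
  by (simp add: adj_iff)

lemma adjD: "(y, z) \<in> adj A \<Longrightarrow> (x, w) \<in> A \<Longrightarrow> cinner w y = cinner x z"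
  by (simp add: adj_iff)

lemma G0sub:
  assumes G: "linear_operator G" "closed G" and GD: "opneg (adj G) \<subseteq> D"
  shows "ring_op D \<subseteq> G"
proof
  fix q assume "q \<in> ring_op D"
  moreover obtain x y where xy: "q = (x, y)" by (cases q)
  ultimately have xy': "(x, - y) \<in> adj D" by (simp add: ring_op_def opneg_iff)
  have "(x, y) \<in> adj (adj G)"
  proof (rule adjI)
    fix a b assume ab: "(a, b) \<in> adj G"
    have "(a, - b) \<in> opneg (adj G)" using ab by (simp add: opneg_iff)
    hence "(a, - b) \<in> D" using GD by blast
    hence "cinner (- b) x = cinner a (- y)" using adjD[OF xy'] by blast
    thus "cinner b x = cinner a y" by (simp add: cinner_minus_left cinner_minus_right)
  qed
  thus "q \<in> G" using adjadj[OF G] xy by blast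
qed

lemma D_BD_in_G:
  assumes G: "linear_operator G" "closed G" and D: "linear_operator D"
    and GD: "opneg (adj G) \<subseteq> D" and q: "q \<in> BD D (ring_op G)"
  shows "(opap D q, q) \<in> G"
proof -
  have "(opap D q, q) \<in> adj (adj G)"
  proof (rule adjI)
    fix a b assume ab: "(a, b) \<in> adj G"
    have ar: "(a, - b) \<in> ring_op G" using ab by (simp add: ring_op_def opneg_iff)
    hence aD: "(a, - b) \<in> D" using GD by (auto simp: ring_op_def)
    have "a \<in> Domain (ring_op G)" using ar by blast
    hence "gip D q a = 0" using q by (auto simp: BD_def)
    hence "cinner q a + cinner (opap D q) (- b) = 0" using opap_eq1[OF D aD] by (simp add: gip_def)
    hence e: "cinner q a = cinner (opap D q) b" by (simp add: cinner_minus_right)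
    have "cinner b (opap D q) = cnj (cinner (opap D q) b)" "cinner a q = cnj (cinner q a)" by (rule cinner_commute)+
    thus "cinner b (opap D q) = cinner a q" using e by simp
  qed
  thus ?thesis using adjadj[OF G] by blast
qed

lemma D_BD_in_BDG:
  assumes G: "linear_operator G" "closed G" and D: "linear_operator D"
    and GD: "opneg (adj G) \<subseteq> D" and q: "q \<in> BD D (ring_op G)"
  shows "opap D q \<in> BD G (ring_op D)"
proof -
  have qG: "(opap D q, q) \<in> G" by (rule D_BD_in_G[OF G D GD q])
  have qD: "q \<in> Domain D" using q by (simp add: BD_def)
  have qDD: "(q, opap D q) \<in> D" by (rule opap_in1[OF D qD])
  show ?thesis unfolding BD_def
  proof (intro CollectI conjI ballI)
    show "opap D q \<in> Domain G" using qG by blast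
    fix w assume "w \<in> Domain (ring_op D)"
    then obtain w2 where w2: "(w, w2) \<in> ring_op D" by blast
    have wG: "(w, w2) \<in> G" using w2 G0sub[OF G GD] by blast
    have "(w, - w2) \<in> adj D" using w2 by (simp add: ring_op_def opneg_iff)
    hence "cinner (opap D q) w = cinner q (- w2)" using adjD[OF _ qDD] by blast
    thus "gip G (opap D q) w = 0"
      using opap_eq1[OF G(1) qG] opap_eq1[OF G(1) wG] by (simp add: gip_def cinner_minus_right)
  qed
qed



lemma conv_dom: "q \<in> Domain (converse_graph L) \<longleftrightarrow> (\<exists>p. (p, q) \<in> L)"
  unfolding converse_graph_def by blast

lemma Lchar_rev:
  assumes G: "linear_operator G" "closed G" and D: "linear_operator D"
    and GD: "opneg (adj G) \<subseteq> D"
    and T_def: "\<forall>u\<in>Domain G. \<forall>v\<in>Domain G.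
                 gip G (T u) v = cinner (a (opap G u)) (opap G v) + cinner (m u) v"
    and q0: "q0 \<in> BD D (ring_op G)" and u: "u \<in> Domain G" and Tu: "T u = opap D q0"
  shows "q0 \<in> Domain (converse_graph (DtN G D a m))"
proof -
  have q0G: "(opap D q0, q0) \<in> G" by (rule D_BD_in_G[OF G D GD q0])
  have q0D: "q0 \<in> Domain D" using q0 by (simp add: BD_def)
  have q0DD: "(q0, opap D q0) \<in> D" by (rule opap_in1[OF D q0D])
  define r where "r = a (opap G u) - q0"
  have "(r, opap D q0 - m u) \<in> adj G"
  proof (rule adjI)
    fix v w assume vw: "(v, w) \<in> G"
    hence v: "v \<in> Domain G" and w: "w = opap G v" using opap_eq1[OF G(1)] by auto
    have "gip G (T u) v = cinner (a (opap G u)) (opap G v) + cinner (m u) v" using T_def u v by blast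
    moreover have "gip G (T u) v = cinner (opap D q0) v + cinner q0 (opap G v)"
      using opap_eq1[OF G(1) q0G] Tu by (simp add: gip_def)
    ultimately have "cinner r (opap G v) = cinner (opap D q0 - m u) v"
      by (simp add: r_def cinner_diff_left algebra_simps)
    moreover have "cinner w r = cnj (cinner r w)" "cinner v (opap D q0 - m u) = cnj (cinner (opap D q0 - m u) v)"
      by (rule cinner_commute)+
    ultimately show "cinner w r = cinner v (opap D q0 - m u)" using w by simp
  qed
  hence "(r, m u - opap D q0) \<in> ring_op G" by (simp add: ring_op_def opneg_iff)
  hence rD: "(r, m u - opap D q0) \<in> D" using GD by (auto simp: ring_op_def)
  have "(r, m u - opap D q0) + (q0, opap D q0) \<in> D"
    using D rD q0DD unfolding linear_operator_def by blast
  hence aD: "(a (opap G u), m u) \<in> D" by (simp add: r_def)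
  have pi: "piBD D (ring_op G) (a (opap G u)) = q0"
  proof (rule piBD_unique[OF D])
    show "ring_op G \<subseteq> D" using GD by (simp add: ring_op_def)
    show "closed (ring_op G)" unfolding ring_op_def by (intro closed_opneg closed_adj)
    show "csub (ring_op G)" unfolding ring_op_def by (intro csub_opneg csub_adj)
    show "a (opap G u) \<in> Domain D" using aD by blast
    show "q0 \<in> BD D (ring_op G)" by fact
    show "a (opap G u) - q0 \<in> Domain (ring_op G)" using \<open>(r, m u - opap D q0) \<in> ring_op G\<close> r_def by blast
  qed
  have "(piBD G (ring_op D) u, q0) \<in> DtN G D a m"
    unfolding DtN_def
    apply (rule CollectI)
    apply (rule exI[of _ u])
    using u aD opap_eq1[OF D aD] pi by auto
  thus ?thesis by (auto simp: conv_dom)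
qed

lemma Lchar_fwd:
  assumes G: "linear_operator G" "closed G" and D: "linear_operator D"
    and GD: "opneg (adj G) \<subseteq> D"
    and T_maps: "\<forall>u\<in>Domain G. T u \<in> Domain G"
    and T_def: "\<forall>u\<in>Domain G. \<forall>v\<in>Domain G.
                 gip G (T u) v = cinner (a (opap G u)) (opap G v) + cinner (m u) v"
    and q: "q \<in> Domain (converse_graph (DtN G D a m))"
  shows "q \<in> BD D (ring_op G) \<and> opap D q \<in> T ` Domain G"
proof -
  obtain u where u: "u \<in> Domain G" and aD: "a (opap G u) \<in> Domain D"
    and mu: "m u - opap D (a (opap G u)) = 0" and qdef: "q = piBD D (ring_op G) (a (opap G u))"
    using q unfolding conv_dom DtN_def by blast
  have sub: "ring_op G \<subseteq> D" using GD by (simp add: ring_op_def)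
  have cl: "closed (ring_op G)" unfolding ring_op_def by (intro closed_opneg closed_adj)
  have cs: "csub (ring_op G)" unfolding ring_op_def by (intro csub_opneg csub_adj)
  have pp: "q \<in> BD D (ring_op G)" "a (opap G u) - q \<in> Domain (ring_op G)"
    using piBD_props[OF D sub cl cs aD] qdef by auto
  define r where "r = a (opap G u) - q"
  obtain s where rs: "(r, s) \<in> ring_op G" using pp(2) r_def by blast
  have rsD: "(r, s) \<in> D" using rs sub by blast
  have rsadj: "(r, - s) \<in> adj G" using rs by (simp add: ring_op_def opneg_iff)
  have qD: "q \<in> Domain D" using pp(1) by (simp add: BD_def)
  have rD: "r \<in> Domain D" using rsD by blast
  have "opap D (a (opap G u)) = opap D (q + r)" by (simp add: r_def)
  also have "\<dots> = opap D q + s" using dom_add(2)[OF D qD rD] opap_eq1[OF D rsD] by simp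
  finally have mueq: "m u = opap D q + s" using mu by simp
  have q0G: "(opap D q, q) \<in> G" by (rule D_BD_in_G[OF G D GD pp(1)])
  have DqG: "opap D q \<in> Domain G" using q0G by blast
  have TuG: "T u \<in> Domain G" using T_maps u by blast
  have eq: "gip G (T u) v = gip G (opap D q) v" if v: "v \<in> Domain G" for v
  proof -
    have vG: "(v, opap G v) \<in> G" by (rule opap_in1[OF G(1) v])
    have c: "cinner (opap G v) r = cinner v (- s)" by (rule adjD[OF rsadj vG])
    have "cinner r (opap G v) = cnj (cinner (opap G v) r)" "cinner (- s) v = cnj (cinner v (- s))"
      by (rule cinner_commute)+
    hence c': "cinner r (opap G v) = - cinner s v" using c by (simp add: cinner_minus_left)
    have "gip G (T u) v = cinner (q + r) (opap G v) + cinner (opap D q + s) v"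
      using T_def u v mueq by (simp add: r_def)
    also have "\<dots> = cinner q (opap G v) + cinner (opap D q) v"
      using c' by (simp add: cinner_add_left)
    also have "\<dots> = gip G (opap D q) v" using opap_eq1[OF G(1) q0G] by (simp add: gip_def)
    finally show ?thesis .
  qed
  define w where "w = T u - opap D q"
  have wG: "w \<in> Domain G" using dom_diff(1)[OF G(1) TuG DqG] by (simp add: w_def)
  have "gip G w w = 0" unfolding w_def using gip_diff_left[OF G(1) TuG DqG] eq[OF wG[unfolded w_def]] by simp
  hence "w = 0" by (rule gip_self0)
  hence "opap D q = T u" by (simp add: w_def)
  thus ?thesis using pp(1) u by blast
qed



lemma ker_fwd:
  assumes G: "linear_operator G" and D: "linear_operator D"
    and GD: "opneg (adj G) \<subseteq> D" and m: "cbounded_linear m" and a: "cbounded_linear a"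
    and T_def: "\<forall>u\<in>Domain G. \<forall>v\<in>Domain G.
                 gip G (T u) v = cinner (a (opap G u)) (opap G v) + cinner (m u) v"
    and u: "u \<in> Domain G" and v: "v \<in> ker_adj G D a m"
  shows "gip G (T u) v = 0"
proof -
  have sub: "ring_op G \<subseteq> D" using GD by (simp add: ring_op_def)
  define b where "b = badj a (opap G v)"
  have vG: "v \<in> Domain G" and bdom: "b \<in> Domain (ring_op G)"
    and bm: "badj m v = opap (ring_op G) b" using v by (auto simp: ker_adj_def b_def)
  have "(b, badj m v) \<in> ring_op G" using opap_in[OF sub D bdom] bm by simp
  hence badj': "(b, - badj m v) \<in> adj G" by (simp add: ring_op_def opneg_iff)
  have c: "cinner (opap G u) b = cinner u (- badj m v)" by (rule adjD[OF badj' opap_in1[OF G u]])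
  have "gip G (T u) v = cinner (a (opap G u)) (opap G v) + cinner (m u) v" using T_def u vG by blast
  also have "\<dots> = cinner (opap G u) b + cinner u (badj m v)"
    by (simp add: b_def badj_prop[OF a] badj_prop[OF m])
  also have "\<dots> = 0" using c by (simp add: cinner_minus_right)
  finally show ?thesis .
qed

lemma ker_rev:
  assumes G: "linear_operator G" "closed G" and D: "linear_operator D"
    and GD: "opneg (adj G) \<subseteq> D" and m: "cbounded_linear m" and a: "cbounded_linear a"
    and T_maps: "\<forall>u\<in>Domain G. T u \<in> Domain G"
    and T_lin: "\<forall>u\<in>Domain G. \<forall>v\<in>Domain G. T (u + v) = T u + T v \<and> (\<forall>c. T (scaleC c u) = scaleC c (T u))"
    and T_def: "\<forall>u\<in>Domain G. \<forall>v\<in>Domain G.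
                 gip G (T u) v = cinner (a (opap G u)) (opap G v) + cinner (m u) v"
    and T_closed_range: "\<forall>x y. (\<forall>n. x n \<in> T ` Domain G) \<longrightarrow> y \<in> Domain G \<longrightarrow>
                 (\<lambda>n. gnorm G (x n - y)) \<longlonglongrightarrow> 0 \<longrightarrow> y \<in> T ` Domain G"
    and x: "x \<in> Domain G" and orth0: "\<forall>v\<in>ker_adj G D a m. gip G x v = 0"
  shows "x \<in> T ` Domain G"
proof -
  have sub: "ring_op G \<subseteq> D" using GD by (simp add: ring_op_def)
  define S where "S = (\<lambda>u. (T u, opap G (T u))) ` Domain G"
  have z0: "0 \<in> Domain G" "opap G 0 = 0" using dom_zero[OF G(1)] by auto
  have "T (0 + 0) = T 0 + T 0" using T_lin z0(1) by blast
  hence T0: "T 0 = 0" by simp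
  have csS: "csub S" unfolding csub_def
  proof (intro conjI ballI allI)
    show "0 \<in> S" unfolding S_def using z0 T0 by (auto simp: zero_prod_def intro!: image_eqI[of _ _ 0])
  next
    fix p q assume "p \<in> S" "q \<in> S"
    then obtain u v where u: "u \<in> Domain G" "p = (T u, opap G (T u))"
      and v: "v \<in> Domain G" "q = (T v, opap G (T v))" by (auto simp: S_def)
    have uv: "u + v \<in> Domain G" by (rule dom_add(1)[OF G(1) u(1) v(1)])
    have e1: "T (u + v) = T u + T v" using T_lin u(1) v(1) by blast
    have "T u \<in> Domain G" "T v \<in> Domain G" using T_maps u(1) v(1) by blast+
    hence e2: "opap G (T u + T v) = opap G (T u) + opap G (T v)" by (rule dom_add(2)[OF G(1)])
    have "p + q = (T (u + v), opap G (T (u + v)))"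
      unfolding e1 e2 u(2) v(2) by simp
    thus "p + q \<in> S" using uv by (auto simp: S_def)
  next
    fix c p assume "p \<in> S"
    then obtain u where u: "u \<in> Domain G" "p = (T u, opap G (T u))" by (auto simp: S_def)
    have uv: "scaleC c u \<in> Domain G" by (rule dom_scale(1)[OF G(1) u(1)])
    have e1: "T (scaleC c u) = scaleC c (T u)" using T_lin u(1) by blast
    have "T u \<in> Domain G" using T_maps u(1) by blast
    hence e2: "opap G (scaleC c (T u)) = scaleC c (opap G (T u))" by (rule dom_scale(2)[OF G(1)])
    have "scaleC c p = (T (scaleC c u), opap G (T (scaleC c u)))"
      unfolding e1 e2 u(2) by simp
    thus "scaleC c p \<in> S" using uv by (auto simp: S_def)
  qed
  have clS: "closed S" unfolding closed_sequential_limits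
  proof (intro allI impI, elim conjE)
    fix X l assume X: "\<forall>n. X n \<in> S" and lim: "X \<longlonglongrightarrow> l"
    have "\<forall>n. \<exists>v. v \<in> Domain G \<and> X n = (T v, opap G (T v))" using X unfolding S_def by blast
    from choice[OF this] obtain u where u0: "\<forall>n. u n \<in> Domain G \<and> X n = (T (u n), opap G (T (u n)))"
      by blast
    hence u: "\<And>n. u n \<in> Domain G" "\<And>n. X n = (T (u n), opap G (T (u n)))" by auto
    have XG: "X n \<in> G" for n using u T_maps opap_in1[OF G(1)] by simp
    have lG: "l \<in> G" using closed_sequentially[OF G(2)] XG lim by blast
    obtain y z where yz: "l = (y, z)" by (cases l)
    have yG: "y \<in> Domain G" using lG yz by blast
    have zy: "z = opap G y" using opap_eq1[OF G(1)] lG yz by simp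
    have TuG: "T (u n) \<in> Domain G" for n using u T_maps by blast
    have gn: "gnorm G (T (u n) - y) = norm (X n - l)" for n
      using dom_diff(2)[OF G(1) TuG yG] by (simp add: gnorm_def u yz zy norm_Pair)
    have "(\<lambda>n. X n - l) \<longlonglongrightarrow> 0" using lim by (rule LIM_zero)
    hence "(\<lambda>n. norm (X n - l)) \<longlonglongrightarrow> 0" by (rule tendsto_norm_zero)
    hence "(\<lambda>n. gnorm G (T (u n) - y)) \<longlonglongrightarrow> 0" by (simp add: gn)
    moreover have "\<forall>n. T (u n) \<in> T ` Domain G" using u(1) by blast
    ultimately have "y \<in> T ` Domain G" using T_closed_range[rule_format, of "\<lambda>n. T (u n)" y] yG by blast
    then obtain u0 where u0: "u0 \<in> Domain G" "y = T u0" by blast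
    show "l \<in> S" unfolding S_def using u0 yz zy by auto
  qed
  obtain p where pS: "p \<in> S" and orth: "\<forall>t\<in>S. cinner ((x, opap G x) - p) t = 0"
    using proj_exists[OF clS] csS unfolding csub_def by blast
  obtain u where u: "u \<in> Domain G" and pu: "p = (T u, opap G (T u))" using pS by (auto simp: S_def)
  have TuG: "T u \<in> Domain G" using T_maps u by blast
  define z where "z = x - T u"
  have zG: "z \<in> Domain G" using dom_diff(1)[OF G(1) x TuG] by (simp add: z_def)
  have zG2: "opap G (x - T u) = opap G x - opap G (T u)" using dom_diff(2)[OF G(1) x TuG] .
  have o1: "gip G (T u') z = 0" if u': "u' \<in> Domain G" for u'
  proof -
    have "cinner ((x, opap G x) - p) (T u', opap G (T u')) = 0" using orth u' by (auto simp: S_def)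
    hence "gip G z (T u') = 0" by (simp add: gip_def pu zG2 z_def)
    thus ?thesis using gip_commute[of G "T u'" z] by simp
  qed
  define b where "b = badj a (opap G z)"
  have "(b, - badj m z) \<in> adj G"
  proof (rule adjI)
    fix u' w assume uw: "(u', w) \<in> G"
    hence u': "u' \<in> Domain G" and w: "w = opap G u'" using opap_eq1[OF G(1)] by auto
    have "cinner (a (opap G u')) (opap G z) + cinner (m u') z = 0" using o1[OF u'] T_def u' zG by simp
    hence "cinner w b + cinner u' (badj m z) = 0" by (simp add: w b_def badj_prop[OF a] badj_prop[OF m])
    thus "cinner w b = cinner u' (- badj m z)" by (simp only: cinner_minus_right eq_neg_iff_add_eq_0)
  qed
  hence bR: "(b, badj m z) \<in> ring_op G" by (simp add: ring_op_def opneg_iff)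
  have zker: "z \<in> ker_adj G D a m" unfolding ker_adj_def
    using zG bR opap_eq[OF sub D bR] by (auto simp: b_def)
  have "gip G x z = 0" using orth0 zker by blast
  moreover have "gip G (T u) z = 0" by (rule o1[OF u])
  ultimately have "gip G z z = 0" using gip_diff_left[OF G(1) x TuG, of z] by (simp add: z_def)
  hence "z = 0" by (rule gip_self0)
  thus ?thesis using u by (simp add: z_def)
qed



lemma cond_eq:
  assumes G: "linear_operator G" "closed G" and D: "linear_operator D"
    and GD: "opneg (adj G) \<subseteq> D" and q0: "q0 \<in> BD D (ring_op G)" and v: "v \<in> Domain G"
  shows "gip G (opap D q0) (piBD G (ring_op D) v) = gip G (opap D q0) v"
proof -
  have sub: "ring_op D \<subseteq> G" by (rule G0sub[OF G GD])
  have cl: "closed (ring_op D)" unfolding ring_op_def by (intro closed_opneg closed_adj)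
  have cs: "csub (ring_op D)" unfolding ring_op_def by (intro csub_opneg csub_adj)
  have pp: "piBD G (ring_op D) v \<in> BD G (ring_op D)" "v - piBD G (ring_op D) v \<in> Domain (ring_op D)"
    using piBD_props[OF G(1) sub cl cs v] by auto
  have piG: "piBD G (ring_op D) v \<in> Domain G" using pp(1) by (simp add: BD_def)
  have DqB: "opap D q0 \<in> BD G (ring_op D)" by (rule D_BD_in_BDG[OF G D GD q0])
  have "gip G (opap D q0) (v - piBD G (ring_op D) v) = 0" using DqB pp(2) by (simp add: BD_def)
  thus ?thesis using gip_diff_right[OF G(1) v piG, of "opap D q0"] by simp
qed

theorem proposition5p7:
  fixes G :: "('h0::chilbert \<times> 'h1::chilbert) set"
    and D :: "('h1 \<times> 'h0) set"
    and m :: "'h0 \<Rightarrow> 'h0"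
    and a :: "'h1 \<Rightarrow> 'h1"
    and T :: "'h0 \<Rightarrow> 'h0"
  assumes G: "densely_defined_closed G"
    and D: "densely_defined_closed D"
    and GD: "opneg (adj G) \<subseteq> D"
    and m: "cbounded_linear m"
    and a: "cbounded_linear a" "coercive a"
    and T_maps: "\<forall>u\<in>Domain G. T u \<in> Domain G"
    and T_lin: "\<forall>u\<in>Domain G. \<forall>v\<in>Domain G. T (u + v) = T u + T v \<and> (\<forall>c. T (scaleC c u) = scaleC c (T u))"
    and T_def: "\<forall>u\<in>Domain G. \<forall>v\<in>Domain G.
                 gip G (T u) v = cinner (a (opap G u)) (opap G v) + cinner (m u) v"
    and T_closed_range: "\<forall>x y. (\<forall>n. x n \<in> T ` Domain G) \<longrightarrow> y \<in> Domain G \<longrightarrow>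
                 (\<lambda>n. gnorm G (x n - y)) \<longlonglongrightarrow> 0 \<longrightarrow> y \<in> T ` Domain G"
  shows "Domain (converse_graph (DtN G D a m)) =
    {q0 \<in> BD D (ring_op G).
       \<forall>v\<in>ker_adj G D a m. gip G (opap D q0) (piBD G (ring_op D) v) = 0}"
proof -
  have G': "linear_operator G" "closed G" using G by (auto simp: densely_defined_closed_def)
  have D': "linear_operator D" using D by (auto simp: densely_defined_closed_def)
  have kerG: "v \<in> Domain G" if "v \<in> ker_adj G D a m" for v using that by (simp add: ker_adj_def)
  show ?thesis
  proof (intro equalityI subsetI)
    fix q assume q: "q \<in> Domain (converse_graph (DtN G D a m))"
    have h: "q \<in> BD D (ring_op G) \<and> opap D q \<in> T ` Domain G"
      by (rule Lchar_fwd[OF G' D' GD T_maps T_def q])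
    then obtain u where u: "u \<in> Domain G" "opap D q = T u" by blast
    have "\<forall>v\<in>ker_adj G D a m. gip G (opap D q) (piBD G (ring_op D) v) = 0"
    proof
      fix v assume v: "v \<in> ker_adj G D a m"
      have "gip G (opap D q) (piBD G (ring_op D) v) = gip G (opap D q) v"
        using cond_eq[OF G' D' GD _ kerG[OF v]] h by blast
      also have "\<dots> = 0" using ker_fwd[OF G'(1) D' GD m a(1) T_def u(1) v] u(2) by simp
      finally show "gip G (opap D q) (piBD G (ring_op D) v) = 0" .
    qed
    thus "q \<in> {q0 \<in> BD D (ring_op G).
       \<forall>v\<in>ker_adj G D a m. gip G (opap D q0) (piBD G (ring_op D) v) = 0}" using h by blast
  next
    fix q0 assume "q0 \<in> {q0 \<in> BD D (ring_op G).
       \<forall>v\<in>ker_adj G D a m. gip G (opap D q0) (piBD G (ring_op D) v) = 0}"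
    hence q0: "q0 \<in> BD D (ring_op G)"
      and c: "\<forall>v\<in>ker_adj G D a m. gip G (opap D q0) (piBD G (ring_op D) v) = 0" by auto
    have DqG: "opap D q0 \<in> Domain G" using D_BD_in_G[OF G' D' GD q0] by blast
    have "\<forall>v\<in>ker_adj G D a m. gip G (opap D q0) v = 0"
      using c cond_eq[OF G' D' GD q0 kerG] by simp
    hence "opap D q0 \<in> T ` Domain G"
      by (rule ker_rev[OF G' D' GD m a(1) T_maps T_lin T_def T_closed_range DqG])
    then obtain u where u: "u \<in> Domain G" "T u = opap D q0" by (metis imageE)
    show "q0 \<in> Domain (converse_graph (DtN G D a m))"
      by (rule Lchar_rev[OF G' D' GD T_def q0 u])
  qed
qed


end
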